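(* Let $n\ge5$, $x_1,\dots,x_{n-1}>0$, $\gamma,\delta>0$ with $\gamma\ne1\ne\delta$, $x_0=1$, and let $\mathbf{R}$ be the $n\times n$ matrix with entries $r_{ij}=x_{j-1}/x_{i-1}$ except $r_{12}=\delta x_1$, $r_{21}=1/(\delta x_1)$, $r_{34}=\gamma x_3/x_2$, $r_{43}=x_2/(\gamma x_3)$. Let $\mathbf{w}^{EM}$ be its principal right eigenvector. If $\gamma>1$ and $\delta<1$, then $w_2^{EM}/w_4^{EM}>x_3/x_1$; if $\gamma<1$ and $\delta>1$, then $w_2^{EM}/w_4^{EM}<x_3/x_1$.
   Context: The principal right eigenvector is the positive (Perron) eigenvector belonging to the largest eigenvalue. *)

theory Defs
  imports "Jordan_Normal_Form.Char_Poly"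
begin

text \<open>Indices are 0-based: entry (i,j) of the Isabelle matrix is the paper's r_{(i+1)(j+1)}.
  The weights x_0 = 1, x_1, ..., x_{n-1} are given by xx x k.\<close>

definition xx :: "(nat \<Rightarrow> real) \<Rightarrow> nat \<Rightarrow> real" where
  "xx x k = (if k = 0 then 1 else x k)"

definition EM_matrix :: "nat \<Rightarrow> (nat \<Rightarrow> real) \<Rightarrow> real \<Rightarrow> real \<Rightarrow> real mat" where
  "EM_matrix n x \<gamma> \<delta> = mat n n (\<lambda>(i, j).
     if (i, j) = (0, 1) then \<delta> * x 1
     else if (i, j) = (1, 0) then 1 / (\<delta> * x 1)
     else if (i, j) = (2, 3) then \<gamma> * x 3 / x 2
     else if (i, j) = (3, 2) then x 2 / (\<gamma> * x 3)
     else xx x j / xx x i)"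

definition principal_right_eigenvector :: "real mat \<Rightarrow> real vec \<Rightarrow> bool" where
  "principal_right_eigenvector A w \<longleftrightarrow>
     w \<in> carrier_vec (dim_col A) \<and> (\<forall>i < dim_vec w. w $ i > 0) \<and>
     (\<exists>r::real. A *\<^sub>v w = r \<cdot>\<^sub>v w \<and>
        (\<forall>\<mu>. eigenvalue (map_mat complex_of_real A) \<mu> \<longrightarrow> cmod \<mu> \<le> r))"

end

theory Submission
  imports Defs
begin

lemma tp: "(t::real) > 0 \<Longrightarrow> t + 1/t \<ge> 2"
proof -
  assume t: "t > 0"
  have "t*t + 1 \<ge> 2*t" using zero_le_square[of "t-1"] by (simp add: algebra_simps)
  hence "(t*t+1)/t \<ge> 2" using t by (simp add: pos_le_divide_eq)
  thus ?thesis using t by (simp add: field_simps)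
qed
lemma cmp:
 fixes r T v1 v3 p q :: real
 assumes r: "r > 1" "r^2 - r - 1 > 0" and T: "T > 0" and pq: "0<p" "p<q"
 and e1: "v1 * (r^2 - 2 + p + 1/p) = T*(r - 1 + 1/p)"
 and e3: "v3 * (r^2 - 2 + q + 1/q) = T*(r - 1 + 1/q)"
 shows "v3 < v1"
proof -
  have q0: "q > 0" using pq by simp
  define Da where "Da = r^2 - 2 + p + 1/p"
  define Db where "Db = r^2 - 2 + q + 1/q"
  define Na where "Na = r - 1 + 1/p"
  define Nb where "Nb = r - 1 + 1/q"
  have r2: "r^2 > 1" using r by (smt (verit) one_less_power)
  have Da: "Da > 0" using tp[OF pq(1)] r2 unfolding Da_def by linarith
  have Db: "Db > 0" using tp[OF q0] r2 unfolding Db_def by linarith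
  have v1: "v1 = T*Na/Da" using e1 Da unfolding Da_def Na_def by (simp add: field_simps)
  have v3: "v3 = T*Nb/Db" using e3 Db unfolding Db_def Nb_def by (simp add: field_simps)
  have id: "Na*Db - Nb*Da = (1/p - 1/q) * (r^2 - r - 1 + (r-1)*p*q + p + q)"
    unfolding Na_def Nb_def Da_def Db_def using pq q0 by (simp add: field_simps power2_eq_square)
  have f1: "1/p - 1/q > 0" using pq by (simp add: frac_less2)
  have f2: "r^2 - r - 1 + (r-1)*p*q + p + q > 0" using r pq q0 by (smt (verit) mult_pos_pos)
  have "Nb*Da < Na*Db" using id mult_pos_pos[OF f1 f2] by linarith
  hence "Nb/Db < Na/Da" using Da Db by (simp add: divide_less_eq field_simps)
  thus ?thesis using v1 v3 T mult_strict_left_mono[of "Nb/Db" "Na/Da" T] by simp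
qed


lemma pair:
  fixes r T a b d :: real
  assumes "d > 0" "r * a = T - b + d * b" "r * b = T - a + a / d"
  shows "b * (r^2 - 2 + d + 1/d) = T * (r - 1 + 1/d)"
proof -
  define c where "c = 1/d"
  have e1: "r*a + (1-d)*b = T" using assms(2) by (simp add: algebra_simps)
  have e2: "(1 - 1/d)*a + r*b = T" using assms(3) by (simp add: algebra_simps)
  have "r*((1 - c)*a + r*b) - (1-c)*(r*a + (1-d)*b) = r*T - (1-c)*T" using e1 e2 unfolding c_def by simp
  hence "b*(r^2 - (1-c)*(1-d)) = T*(r - 1 + c)" by (simp add: algebra_simps power2_eq_square)
  hence "b*(r^2 - (1-1/d)*(1-d)) = T*(r - 1 + 1/d)" unfolding c_def .
  moreover have "(1-1/d)*(1-d) = 2 - d - 1/d" using assms(1) by (simp add: field_simps)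
  ultimately have "b * (r\<^sup>2 - (2 - d - 1 / d)) = T * (r - 1 + 1 / d)" by simp
  moreover have "r\<^sup>2 - (2 - d - 1 / d) = r^2 - 2 + d + 1/d" by simp
  ultimately show ?thesis by simp
qed

lemma sum_if1:
  fixes f :: "nat \<Rightarrow> real"
  assumes "finite A" "k \<in> A"
  shows "(\<Sum>j\<in>A. if j = k then c else f j) = sum f A - f k + c"
proof -
  have "(\<Sum>j\<in>A. if j = k then c else f j) = c + (\<Sum>j\<in>A-{k}. if j = k then c else f j)"
    using sum.remove[OF assms, of "\<lambda>j. if j = k then c else f j"] by simp
  also have "(\<Sum>j\<in>A-{k}. if j = k then c else f j) = (\<Sum>j\<in>A-{k}. f j)"
    by (rule sum.cong) auto
  also have "\<dots> = sum f A - f k" using sum.remove[OF assms, of f] by simp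
  finally show ?thesis by simp
qed

theorem mainTheorem19:
  fixes n :: nat and x :: "nat \<Rightarrow> real" and \<gamma> \<delta> :: real and w :: "real vec"
  assumes "n \<ge> 5"
    and "\<And>k. 1 \<le> k \<Longrightarrow> k \<le> n - 1 \<Longrightarrow> x k > 0"
    and "\<gamma> > 0" and "\<delta> > 0" and "\<gamma> \<noteq> 1" and "\<delta> \<noteq> 1"
    and "principal_right_eigenvector (EM_matrix n x \<gamma> \<delta>) w"
  shows "(\<gamma> > 1 \<and> \<delta> < 1 \<longrightarrow> w $ 1 / w $ 3 > x 3 / x 1) \<and>
         (\<gamma> < 1 \<and> \<delta> > 1 \<longrightarrow> w $ 1 / w $ 3 < x 3 / x 1)"
proof -
  define M where "M = EM_matrix n x \<gamma> \<delta>"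
  have dimM: "dim_row M = n" "dim_col M = n" unfolding M_def EM_matrix_def by auto
  have Mij: "M $$ (i,j) = (if (i, j) = (0, 1) then \<delta> * x 1
     else if (i, j) = (1, 0) then 1 / (\<delta> * x 1)
     else if (i, j) = (2, 3) then \<gamma> * x 3 / x 2
     else if (i, j) = (3, 2) then x 2 / (\<gamma> * x 3)
     else xx x j / xx x i)" if "i < n" "j < n" for i j
    using that unfolding M_def EM_matrix_def by simp
  obtain r where eig: "M *\<^sub>v w = r \<cdot>\<^sub>v w" and wpos: "\<And>i. i < dim_vec w \<Longrightarrow> w $ i > 0"
    and wdim: "dim_vec w = n"
    using assms(7) unfolding principal_right_eigenvector_def M_def[symmetric] using dimM by auto
  have xpos: "xx x j > 0" if "j < n" for j
    using assms(2)[of j] that unfolding xx_def by auto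
  have x1: "x 1 > 0" and x2: "x 2 > 0" and x3: "x 3 > 0" using assms(1,2) by auto
  have xx1: "xx x 1 = x 1" "xx x 2 = x 2" "xx x 3 = x 3" "xx x 0 = 1" unfolding xx_def by auto
  define v where "v j = xx x j * w $ j" for j
  define T where "T = (\<Sum>j<n. v j)"
  have vpos: "v j > 0" if "j < n" for j using xpos[OF that] wpos[of j] that wdim unfolding v_def by simp
  have row: "(\<Sum>j<n. xx x i * M $$ (i,j) * w $ j) = r * v i" if "i < n" for i
  proof -
    have "(M *\<^sub>v w) $ i = (r \<cdot>\<^sub>v w) $ i" using eig by simp
    hence "(\<Sum>j<n. M $$ (i,j) * w $ j) = r * w $ i"
      using that dimM wdim by (simp add: scalar_prod_def lessThan_atLeast0)
    hence "xx x i * (\<Sum>j<n. M $$ (i,j) * w $ j) = r * v i" unfolding v_def by simp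
    thus ?thesis by (simp add: sum_distrib_left mult.assoc)
  qed
  have n5: "0 < n" "1 < n" "2 < n" "3 < n" "4 < n" using assms(1) by auto
  have fin: "finite {..<n}" by simp
  have M10: "M $$ (Suc 0,0) = 1 / (\<delta> * x 1)" using Mij[of 1 0] n5 by simp
  have M32: "M $$ (3,2) = x 2 / (\<gamma> * x 3)" using Mij[of 3 2] n5 by simp
  have r0: "r * v 0 = T - v 1 + \<delta> * v 1"
  proof -
    have "(\<Sum>j<n. xx x 0 * M $$ (0,j) * w $ j) = (\<Sum>j<n. if j = 1 then \<delta> * v 1 else v j)"
      by (rule sum.cong) (auto simp: Mij v_def xx_def n5)
    thus ?thesis using row[OF n5(1)] sum_if1[OF fin, of 1] n5 unfolding T_def by simp
  qed
  have r1: "r * v 1 = T - v 0 + v 0 / \<delta>"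
  proof -
    have "(\<Sum>j<n. xx x 1 * M $$ (1,j) * w $ j) = (\<Sum>j<n. if j = 0 then v 0 / \<delta> else v j)"
      by (rule sum.cong) (use x1 assms(3,4) in \<open>auto simp: M10 Mij v_def xx_def n5\<close>)
    thus ?thesis using row[OF n5(2)] sum_if1[OF fin, of 0] n5 unfolding T_def by simp
  qed
  have r2: "r * v 2 = T - v 3 + \<gamma> * v 3"
  proof -
    have "(\<Sum>j<n. xx x 2 * M $$ (2,j) * w $ j) = (\<Sum>j<n. if j = 3 then \<gamma> * v 3 else v j)"
      by (rule sum.cong) (use x2 assms(3,4) in \<open>auto simp: Mij v_def xx_def n5\<close>)
    thus ?thesis using row[OF n5(3)] sum_if1[OF fin, of 3] n5 unfolding T_def by simp
  qed
  have r3: "r * v 3 = T - v 2 + v 2 / \<gamma>"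
  proof -
    have "(\<Sum>j<n. xx x 3 * M $$ (3,j) * w $ j) = (\<Sum>j<n. if j = 2 then v 2 / \<gamma> else v j)"
      by (rule sum.cong) (use x3 assms(3,4) in \<open>auto simp: M32 Mij v_def xx_def n5\<close>)
    thus ?thesis using row[OF n5(4)] sum_if1[OF fin, of 2] n5 unfolding T_def by simp
  qed
  have r4: "r * v 4 = T"
  proof -
    have "(\<Sum>j<n. xx x 4 * M $$ (4,j) * w $ j) = (\<Sum>j<n. v j)"
      by (rule sum.cong) (use xpos[OF n5(5)] in \<open>auto simp: Mij v_def n5\<close>)
    thus ?thesis using row[OF n5(5)] unfolding T_def by simp
  qed
  have Tge: "v 0 + v 1 + v 2 + v 3 + v 4 \<le> T"
  proof -
    have "(\<Sum>j\<in>{0,1,2,3,4::nat}. v j) \<le> (\<Sum>j<n. v j)"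
      by (rule sum_mono2) (use n5 vpos less_imp_le in auto)
    thus ?thesis unfolding T_def by simp
  qed
  have v0: "v 0 > 0" and v1: "v 1 > 0" and v2: "v 2 > 0" and v3: "v 3 > 0" and v4: "v 4 > 0"
    using vpos n5 by auto
  have Tpos: "T > 0" using Tge v0 v1 v2 v3 v4 by linarith
  have "0 < r * v 4" using r4 Tpos by simp
  hence rpos: "r > 0" using v4 by (auto simp: zero_less_mult_iff)
  have i0: "r * v 0 + v 1 > T" using r0 mult_pos_pos[OF assms(4) v1] by linarith
  have i1: "r * v 1 + v 0 > T" using r1 divide_pos_pos[OF v0 assms(4)] by linarith
  have i2: "r * v 2 + v 3 > T" using r2 mult_pos_pos[OF assms(3) v3] by linarith
  have i3: "r * v 3 + v 2 > T" using r3 divide_pos_pos[OF v2 assms(3)] by linarith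
  define V where "V = v 0 + v 1 + v 2 + v 3"
  have a1: "(r+1) * V > 4 * T" using i0 i1 i2 i3 unfolding V_def by (simp add: algebra_simps)
  have "r * (V + v 4) \<le> r * T" using Tge rpos unfolding V_def by simp
  hence a2: "V * r \<le> T * (r - 1)" using r4 by (simp add: algebra_simps)
  have b1: "(r+1) * V * r > 4 * T * r" using a1 rpos by simp
  have b2: "(r+1) * (V * r) \<le> (r+1) * (T * (r - 1))" using a2 rpos by simp
  have "T * (r^2 - 1 - 4*r) > 0" using b1 b2 by (simp add: algebra_simps power2_eq_square)
  hence rr: "r^2 - 1 - 4*r > 0" using Tpos by (simp add: zero_less_mult_iff)
  have rgt1: "r > 1"
  proof (rule ccontr)
    assume "\<not> r > 1"
    hence "r * r \<le> r * 1" using rpos by (intro mult_left_mono) auto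
    moreover have "r^2 = r*r" by (simp add: power2_eq_square)
    ultimately show False using rr rpos by linarith
  qed
  have rq: "r^2 - r - 1 > 0" using rr rpos by linarith
  have p1: "v 1 * (r^2 - 2 + \<delta> + 1/\<delta>) = T * (r - 1 + 1/\<delta>)"
    by (rule pair[OF assms(4) r0 r1])
  have p3: "v 3 * (r^2 - 2 + \<gamma> + 1/\<gamma>) = T * (r - 1 + 1/\<gamma>)"
    by (rule pair[OF assms(3) r2 r3])
  have w1: "w $ 1 = v 1 / x 1" using x1 unfolding v_def xx_def by simp
  have w3: "w $ 3 = v 3 / x 3" using x3 unfolding v_def xx_def by simp
  have ratio: "w $ 1 / w $ 3 = (v 1 / v 3) * (x 3 / x 1)" using w1 w3 by simp
  show ?thesis
  proof (intro conjI impI)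
    assume "1 < \<gamma> \<and> \<delta> < 1"
    hence "v 3 < v 1" using cmp[OF rgt1 rq Tpos assms(4) _ p1 p3] by simp
    hence "v 1 / v 3 > 1" using v3 by simp
    hence "1 * (x 3 / x 1) < (v 1 / v 3) * (x 3 / x 1)" by (rule mult_strict_right_mono[OF _ divide_pos_pos[OF x3 x1]])
    thus "w $ 1 / w $ 3 > x 3 / x 1" unfolding ratio by simp
  next
    assume "\<gamma> < 1 \<and> 1 < \<delta>"
    hence "v 1 < v 3" using cmp[OF rgt1 rq Tpos assms(3) _ p3 p1] by simp
    hence "v 1 / v 3 < 1" using v3 by simp
    hence "(v 1 / v 3) * (x 3 / x 1) < 1 * (x 3 / x 1)" by (rule mult_strict_right_mono[OF _ divide_pos_pos[OF x3 x1]])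
    thus "w $ 1 / w $ 3 < x 3 / x 1" unfolding ratio by simp
  qed
qed

end
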